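(* Let $n\ge1$, $G\le S_n$ and $\chi:G\to\mathbb{C}$ any function. For every $\sigma\in S_n$, $$d_\chi^G(S_\sigma)=\sum_{\tau\in X_\sigma}\hat\chi(\tau).$$
   Context: $S_n$ is the symmetric group on $[n]=\{1,\dots,n\}$. For $G\le S_n$ and $\chi:G\to\mathbb C$, $\hat\chi:S_n\to\mathbb C$ is the extension of $\chi$ that vanishes outside $G$, and the generalized matrix function $d_\chi^G:M_n(\mathbb C)\to\mathbb C$ is $d_\chi^G(A)=\sum_{\sigma\in S_n}\hat\chi(\sigma)\prod_{i=1}^n A_{i\,\sigma(i)}$. For $\sigma\in S_n$, $S_\sigma$ is the $n\times n$ $0/1$ matrix with $(S_\sigma)_{ij}=1$ iff $\sigma(i)=j$ or $\sigma^{-1}(i)=j$. Every $\sigma\in S_n$ has a unique (up to order) decomposition $\sigma=\sigma_1\cdots\sigma_k$ into pairwise disjoint cycles of length at least $2$ ($k=0$ for the identity). For a cycle $\omega=(a_1\,a_2\,\dots\,a_s)$ with $s$ even, let $S(\omega)=\{(a_1\,a_2)(a_3\,a_4)\cdots(a_{s-1}\,a_s),\ (a_s\,a_1)(a_2\,a_3)\cdots(a_{s-2}\,a_{s-1})\}$. Set $X_\omega=\{\omega,\omega^{-1}\}$ if $s$ is odd and $X_\omega=\{\omega,\omega^{-1}\}\cup S(\omega)$ if $s$ is even; for $\sigma=\sigma_1\cdots\sigma_k$ set $X_\sigma=\{\tau_1\cdots\tau_k:\tau_j\in X_{\sigma_j}\}$ ($X_{\mathrm{id}}=\{\mathrm{id}\}$).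 *)

theory Defs
  imports Complex_Main "HOL-Combinatorics.Cycles" "HOL-Algebra.Sym_Groups"
begin

definition ext_zero :: "(nat \<Rightarrow> nat) set \<Rightarrow> ((nat \<Rightarrow> nat) \<Rightarrow> complex) \<Rightarrow> (nat \<Rightarrow> nat) \<Rightarrow> complex" where
  "ext_zero G chi \<sigma> = (if \<sigma> \<in> G then chi \<sigma> else 0)"

definition gen_matrix_fun :: "nat \<Rightarrow> (nat \<Rightarrow> nat) set \<Rightarrow> ((nat \<Rightarrow> nat) \<Rightarrow> complex)
    \<Rightarrow> (nat \<Rightarrow> nat \<Rightarrow> complex) \<Rightarrow> complex" where
  "gen_matrix_fun n G chi A =
     (\<Sum>\<sigma> \<in> {\<sigma>. \<sigma> permutes {1..n}}. ext_zero G chi \<sigma> * (\<Prod>i\<in>{1..n}. A i (\<sigma> i)))"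

definition S_mat :: "(nat \<Rightarrow> nat) \<Rightarrow> nat \<Rightarrow> nat \<Rightarrow> complex" where
  "S_mat \<sigma> i j = (if \<sigma> i = j \<or> inv_into UNIV \<sigma> i = j then 1 else 0)"

fun pair_prod :: "nat list \<Rightarrow> nat \<Rightarrow> nat" where
  "pair_prod (a # b # rest) = transpose a b \<circ> pair_prod rest"
| "pair_prod _ = id"

definition S_set :: "nat list \<Rightarrow> (nat \<Rightarrow> nat) set" where
  "S_set cs = {pair_prod cs, pair_prod (last cs # butlast cs)}"

text \<open>X_omega for the cycle omega = cycle_of_list cs (maps a_i to a_(i+1)).\<close>
definition X_cycle :: "nat list \<Rightarrow> (nat \<Rightarrow> nat) set" where
  "X_cycle cs = (if odd (length cs) then {cycle_of_list cs, inv_into UNIV (cycle_of_list cs)}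
                 else {cycle_of_list cs, inv_into UNIV (cycle_of_list cs)} \<union> S_set cs)"

definition cycle_decomp_of :: "(nat \<Rightarrow> nat) \<Rightarrow> nat list list \<Rightarrow> bool" where
  "cycle_decomp_of \<sigma> css \<longleftrightarrow>
     (\<forall>cs \<in> set css. distinct cs \<and> length cs \<ge> 2) \<and>
     (\<forall>i < length css. \<forall>j < length css. i \<noteq> j \<longrightarrow> set (css ! i) \<inter> set (css ! j) = {}) \<and>
     \<sigma> = foldr (\<circ>) (map cycle_of_list css) id"

definition X_perm :: "nat list list \<Rightarrow> (nat \<Rightarrow> nat) set" where
  "X_perm css = {foldr (\<circ>) \<tau>s id | \<tau>s. list_all2 (\<lambda>\<tau> cs. \<tau> \<in> X_cycle cs) \<tau>s css}"

end

theory Submission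
  imports Defs
begin

definition cx :: "nat list \<Rightarrow> nat \<Rightarrow> nat" where
  "cx cs k = cs ! (k mod length cs)"

definition Qc :: "(nat \<Rightarrow> nat) \<Rightarrow> (nat \<Rightarrow> nat) \<Rightarrow> bool" where
  "Qc f \<tau> \<longleftrightarrow> inj \<tau> \<and> (\<forall>a. \<tau> a = f a \<or> \<tau> a = inv_into UNIV f a)"

lemma cx_mod: "cx cs (k mod length cs) = cx cs k"
  by (simp add: cx_def)

lemma cx_add_len: "cx cs (k + length cs) = cx cs k"
  by (simp add: cx_def)

lemma cx_c:
  assumes "distinct cs" "cs \<noteq> []"
  shows "cycle_of_list cs (cx cs k) = cx cs (Suc k)"
proof -
  have "cycle_of_list cs (cs ! (k mod length cs)) = map (cycle_of_list cs) cs ! (k mod length cs)"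
    using assms by simp
  also have "\<dots> = rotate1 cs ! (k mod length cs)"
    using cyclic_rotation[OF assms(1), of 1] by simp
  also have "\<dots> = cs ! (Suc (k mod length cs) mod length cs)"
    using assms by (simp add: nth_rotate1)
  finally show ?thesis by (simp add: cx_def mod_Suc_eq)
qed

lemma bij_c: "bij (cycle_of_list cs)"
  using permutes_bij[OF cycle_permutes] .

lemma cx_inv_c:
  assumes "distinct cs" "cs \<noteq> []"
  shows "inv_into UNIV (cycle_of_list cs) (cx cs k) = cx cs (k + length cs - 1)"
proof -
  have "cx cs k = cx cs (Suc (k + length cs - 1))"
    using assms cx_add_len[of cs k] by (cases "length cs") auto
  also have "\<dots> = cycle_of_list cs (cx cs (k + length cs - 1))"
    using cx_c[OF assms] by simp
  finally show ?thesis
    using bij_is_inj[OF bij_c[of cs]] by (metis inv_into_f_f UNIV_I)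
qed

lemma outside_c: "y \<notin> set cs \<Longrightarrow> cycle_of_list cs y = y"
  by (rule id_outside_supp)

lemma outside_inv_c: "y \<notin> set cs \<Longrightarrow> inv_into UNIV (cycle_of_list cs) y = y"
  using permutes_not_in[OF permutes_inv[OF cycle_permutes[of cs]]] by simp

lemma in_set_cx: "y \<in> set cs \<Longrightarrow> \<exists>k<length cs. y = cx cs k"
  by (auto simp: cx_def in_set_conv_nth)

lemma cx_in_set: "cs \<noteq> [] \<Longrightarrow> cx cs k \<in> set cs"
  by (simp add: cx_def)

lemma cx_eq_iff: "distinct cs \<Longrightarrow> cs \<noteq> [] \<Longrightarrow> cx cs i = cx cs j \<longleftrightarrow> i mod length cs = j mod length cs"
  by (simp add: cx_def nth_eq_iff_index_eq)

lemma fun_eq_cycle: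
  assumes "\<And>y. y \<notin> set cs \<Longrightarrow> f y = g y" "\<And>k. k < length cs \<Longrightarrow> f (cx cs k) = g (cx cs k)"
  shows "f = g"
proof
  fix y show "f y = g y"
    using assms in_set_cx[of y cs] by (cases "y \<in> set cs") auto
qed

lemma pp_outside: "y \<notin> set l \<Longrightarrow> pair_prod l y = y"
  by (induction l rule: pair_prod.induct) (auto simp: transpose_eq_iff)

lemma pp_bij: "bij (pair_prod l)"
proof (induction l rule: pair_prod.induct)
  case (1 a b rest)
  have "bij (transpose a b \<circ> pair_prod rest)" using bij_comp[OF "1.IH" bij_transpose[of a b]] .
  then show ?case by (simp only: pair_prod.simps)
qed (simp_all add: bij_betw_def)

lemma pp_nth:
  "distinct l \<Longrightarrow> even (length l) \<Longrightarrow> j < length l \<Longrightarrow>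
    pair_prod l (l ! j) = l ! (if even j then Suc j else j - 1)"
proof (induction l arbitrary: j rule: pair_prod.induct)
  case (1 a b rest)
  have ab: "a \<notin> set rest" "b \<notin> set rest" "a \<noteq> b" using "1.prems"(1) by auto
  show ?case
  proof (cases j)
    case 0
    then show ?thesis using ab by (simp add: pp_outside)
  next
    case (Suc j1)
    show ?thesis
    proof (cases j1)
      case 0
      then show ?thesis using ab Suc by (simp add: pp_outside)
    next
      case (Suc i)
      have j: "j = Suc (Suc i)" using Suc \<open>j = Suc j1\<close> by simp
      have il: "i < length rest" using "1.prems"(3) j by simp
      have IH: "pair_prod rest (rest ! i) = rest ! (if even i then Suc i else i - 1)"
        using "1.IH"[of i] "1.prems" il by simp
      have idx: "(if even i then Suc i else i - 1) < length rest"
        using il "1.prems"(2) by (cases "even i") (auto, presburger)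
      have inr: "rest ! (if even i then Suc i else i - 1) \<in> set rest"
        using idx by (rule nth_mem)
      have tr: "transpose a b (rest ! (if even i then Suc i else i - 1)) = rest ! (if even i then Suc i else i - 1)"
        using inr ab by (metis transpose_apply_other)
      have "pair_prod (a # b # rest) ((a # b # rest) ! j) = transpose a b (pair_prod rest (rest ! i))"
        using j by simp
      also have "\<dots> = rest ! (if even i then Suc i else i - 1)" using IH tr by simp
      also have "\<dots> = (a # b # rest) ! (if even j then Suc j else j - 1)"
        using j by (cases i) auto
      finally show ?thesis .
    qed
  qed
qed auto

lemma cx_nth: "k < length cs \<Longrightarrow> cx cs k = cs ! k"
  by (simp add: cx_def)

lemma pp_cx:
  assumes "distinct cs" "even (length cs)" "length cs \<ge> 2" "k < length cs"
  shows "pair_prod cs (cx cs k) = (if even k then cx cs (Suc k) else cx cs (k + length cs - 1))"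
proof (cases "even k")
  case True
  then have "Suc k < length cs" using assms(2,4) proof - have "Suc k \<noteq> length cs" using assms(2) True by (metis even_Suc) then show ?thesis using assms(4) by linarith qed
  then show ?thesis using True assms pp_nth[of cs k] by (simp add: cx_nth)
next
  case False
  then have k1: "k \<ge> 1" by (cases k) auto
  have "cx cs (k + length cs - 1) = cx cs (k - 1)"
    using cx_add_len[of cs "k - 1"] k1 by simp
  then show ?thesis using False assms pp_nth[of cs k] k1 by (simp add: cx_nth)
qed

lemma pp2_cx:
  assumes "distinct cs" "even (length cs)" "length cs \<ge> 2" "k < length cs"
  shows "pair_prod (last cs # butlast cs) (cx cs k) = (if odd k then cx cs (Suc k) else cx cs (k + length cs - 1))"
proof -
  let ?s = "length cs"
  let ?l = "last cs # butlast cs"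
  have ne: "cs \<noteq> []" using assms by auto
  have dl: "distinct ?l" using assms(1) ne
  proof -
    have "distinct (butlast cs @ [last cs])" using assms(1) ne by (simp add: append_butlast_last_id)
    then show ?thesis by simp
  qed
  have len: "length ?l = ?s" using ne by simp
  have l0: "?l ! 0 = cs ! (?s - 1)" using ne by (simp add: last_conv_nth)
  have lS: "?l ! Suc j = cs ! j" if "j < ?s - 1" for j using that by (simp add: nth_butlast)
  show ?thesis
  proof (cases "k = ?s - 1")
    case True
    then have "odd k" using assms proof - have "Suc k = ?s" using True assms(3) by simp then show ?thesis using assms(2) by (metis even_Suc) qed
    have "cx cs k = ?l ! 0" using True l0 assms by (simp add: cx_nth)
    then have "pair_prod ?l (cx cs k) = ?l ! 1" using pp_nth[OF dl, of 0] len assms ne by simp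
    also have "\<dots> = cs ! 0" using lS[of 0] assms by simp
    also have "\<dots> = cx cs (Suc k)" proof - have "Suc k = ?s" using True assms by simp then show ?thesis by (simp add: cx_def) qed
    finally show ?thesis using \<open>odd k\<close> by simp
  next
    case False
    then have kk: "k < ?s - 1" using assms by simp
    have e: "cx cs k = ?l ! Suc k" using lS[OF kk] assms by (simp add: cx_nth)
    have pk: "pair_prod ?l (cx cs k) = ?l ! (if even (Suc k) then Suc (Suc k) else k)"
      using e pp_nth[OF dl, of "Suc k"] len assms kk ne by (cases "odd k") auto
    show ?thesis
    proof (cases "odd k")
      case True
      then have "Suc (Suc k) < ?s" using kk assms(2) proof - have "Suc (Suc k) \<noteq> ?s" using True assms(2) by (metis even_Suc) then show ?thesis using kk by linarith qed
      then show ?thesis using pk True lS[of "Suc k"] by (simp add: cx_nth)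
    next
      case False
      show ?thesis
      proof (cases k)
        case 0
        then show ?thesis using pk l0 assms by (simp add: cx_def)
      next
        case (Suc i)
        have "cx cs (k + ?s - 1) = cx cs i" using cx_add_len[of cs i] Suc by simp
        then show ?thesis using pk False Suc lS[of i] kk by (simp add: cx_nth)
      qed
    qed
  qed
qed

lemma Qc_vals:
  assumes "distinct cs" "length cs \<ge> 2" "inj \<tau>"
    and out: "\<And>a. a \<notin> set cs \<Longrightarrow> \<tau> a = a"
    and inn: "\<And>k. k < length cs \<Longrightarrow> \<tau> (cx cs k) = cx cs (Suc k) \<or> \<tau> (cx cs k) = cx cs (k + length cs - 1)"
  shows "Qc (cycle_of_list cs) \<tau>"
  unfolding Qc_def
proof (intro conjI allI assms(3))
  fix a
  have ne: "cs \<noteq> []" using assms by auto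
  show "\<tau> a = cycle_of_list cs a \<or> \<tau> a = inv_into UNIV (cycle_of_list cs) a"
  proof (cases "a \<in> set cs")
    case True
    then obtain k where "k < length cs" "a = cx cs k" using in_set_cx by blast
    then show ?thesis using inn[of k] cx_c[OF assms(1) ne] cx_inv_c[OF assms(1) ne] by auto
  next
    case False
    then show ?thesis using out[OF False] outside_c[OF False] by simp
  qed
qed

lemma set_l2: "cs \<noteq> [] \<Longrightarrow> set (last cs # butlast cs) \<subseteq> set cs"
  by (auto dest: in_set_butlastD)

lemma X_sub:
  assumes "distinct cs" "length cs \<ge> 2"
  shows "X_cycle cs \<subseteq> {\<tau>. Qc (cycle_of_list cs) \<tau>}"
proof
  fix \<tau> assume t: "\<tau> \<in> X_cycle cs"
  have ne: "cs \<noteq> []" using assms by auto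
  have q1: "Qc (cycle_of_list cs) (cycle_of_list cs)"
    unfolding Qc_def using bij_is_inj[OF bij_c] by auto
  have q2: "Qc (cycle_of_list cs) (inv_into UNIV (cycle_of_list cs))"
    unfolding Qc_def using bij_is_inj[OF bij_imp_bij_inv[OF bij_c]] by auto
  show "\<tau> \<in> {\<tau>. Qc (cycle_of_list cs) \<tau>}"
  proof (cases "odd (length cs)")
    case True
    then show ?thesis using t q1 q2 by (auto simp: X_cycle_def)
  next
    case False
    have q3: "Qc (cycle_of_list cs) (pair_prod cs)"
      by (rule Qc_vals[OF assms bij_is_inj[OF pp_bij]])
        (use pp_outside pp_cx[OF assms(1) _ assms(2)] False in auto)
    have q4: "Qc (cycle_of_list cs) (pair_prod (last cs # butlast cs))"
      by (rule Qc_vals[OF assms bij_is_inj[OF pp_bij]])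
        (use pp2_cx[OF assms(1) _ assms(2)] False in \<open>auto intro!: pp_outside dest: subsetD[OF set_l2[OF ne]]\<close>)
    show ?thesis using t q1 q2 q3 q4 False by (auto simp: X_cycle_def S_set_def)
  qed
qed

lemma P_mod2:
  fixes P :: "nat \<Rightarrow> bool"
  assumes "\<And>k. P (k + 2) = P k"
  shows "P k = P (k mod 2)"
proof -
  have "P (k mod 2 + 2 * j) = P (k mod 2)" for j
    by (induction j) (use assms in \<open>auto simp: add.assoc[symmetric]\<close>)
  then show ?thesis by (metis mod_mult_div_eq add.commute)
qed

lemma X_super:
  assumes "distinct cs" "length cs \<ge> 2" "Qc (cycle_of_list cs) \<tau>"
  shows "\<tau> \<in> X_cycle cs"
proof -
  let ?s = "length cs"
  let ?c = "cycle_of_list cs"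
  have ne: "cs \<noteq> []" using assms by auto
  have inj: "inj \<tau>" using assms(3) by (simp add: Qc_def)
  have out: "\<tau> a = a" if "a \<notin> set cs" for a
    using assms(3) outside_c[OF that] outside_inv_c[OF that] unfolding Qc_def by metis
  have inn: "\<tau> (cx cs k) = cx cs (Suc k) \<or> \<tau> (cx cs k) = cx cs (k + ?s - 1)" for k
    using assms(3) cx_c[OF assms(1) ne, of k] cx_inv_c[OF assms(1) ne, of k] unfolding Qc_def by metis
  define P where "P k \<longleftrightarrow> \<tau> (cx cs k) = cx cs (Suc k)" for k
  have notP: "\<not> P k \<Longrightarrow> \<tau> (cx cs k) = cx cs (k + ?s - 1)" for k using inn[of k] P_def by auto
  have Pmod: "P (k mod ?s) = P k" for k
    unfolding P_def cx_mod
    by (simp add: cx_def mod_Suc_eq)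
  have isc: "\<tau> = ?c" if "\<And>k. P k"
    by (rule fun_eq_cycle[of cs]) (use that out cx_c[OF assms(1) ne] in \<open>auto simp: P_def outside_c\<close>)
  have isic: "\<tau> = inv_into UNIV ?c" if "\<And>k. \<not> P k"
    by (rule fun_eq_cycle[of cs]) (use that notP out cx_inv_c[OF assms(1) ne] in \<open>auto simp: outside_inv_c\<close>)
  have cx1: "cx cs (k + 2) = cx cs k \<Longrightarrow> ?s \<le> 2" for k
  proof -
    assume "cx cs (k + 2) = cx cs k"
    then have "(k + 2) mod ?s = k mod ?s" using cx_eq_iff[OF assms(1) ne] by simp
    then have "?s dvd 2" using mod_eq_dvd_iff_nat[of k "k+2" ?s] by simp
    then show "?s \<le> 2" by (simp add: dvd_imp_le)
  qed
  show ?thesis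
  proof (cases "?s = 2")
    case True
    have "cx cs (k + ?s - 1) = cx cs (Suc k)" for k using True by simp
    then have "P k" for k using inn[of k] P_def by auto
    then have "\<tau> = ?c" using isc by blast
    then show ?thesis by (simp add: X_cycle_def)
  next
    case False
    then have s3: "?s \<ge> 3" using assms(2) by simp
    have step: "P (k + 2)" if "P k" for k
    proof (rule ccontr)
      assume "\<not> P (k + 2)"
      then have "\<tau> (cx cs (k + 2)) = cx cs (k + 2 + ?s - 1)" using notP by blast
      also have "cx cs (k + 2 + ?s - 1) = cx cs (Suc k)"
        using cx_add_len[of cs "Suc k"] by (simp add: add.commute add.left_commute)
      finally have "\<tau> (cx cs (k + 2)) = \<tau> (cx cs k)" using that P_def by simp
      then have "cx cs (k + 2) = cx cs k" using inj by (simp add: inj_eq)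
      then show False using cx1 s3 by fastforce
    qed
    have stepn: "P (k + 2 * j)" if "P k" for k j
      by (induction j) (use that step in \<open>auto simp: add.assoc[symmetric]\<close>)
    have P2: "P (k + 2) = P k" for k
    proof
      assume "P (k + 2)"
      then have "P (k + 2 + 2 * (?s - 1))" by (rule stepn)
      moreover have "k + 2 + 2 * (?s - 1) = k + ?s * 2" using s3 by simp
      ultimately have "P (k + ?s * 2)" by metis
      then show "P k" using Pmod[of "k + ?s * 2"] Pmod[of k] by simp
    qed (rule step)
    have Pk: "P k = P (k mod 2)" for k using P_mod2[of P, OF P2] .
    show ?thesis
    proof (cases "odd ?s")
      case True
      have m1: "(1 + ?s) mod ?s = 1" using s3 mod_add_self2[of 1 ?s] by simp
      have "P 1 = P (1 + ?s)" using Pmod[of "1 + ?s"] unfolding m1 .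
      also have "\<dots> = P 0" using Pk[of "1 + ?s"] True by simp
      finally have P10: "P 1 = P 0" .
      have "P k = P 0" for k using Pk[of k] P10 by (cases "even k") (auto simp: odd_iff_mod_2_eq_one even_iff_mod_2_eq_zero)
      then show ?thesis using isc isic by (cases "P 0") (auto simp: X_cycle_def)
    next
      case False
      then have ev: "even ?s" by simp
      consider "P 0" "P 1" | "\<not> P 0" "\<not> P 1" | "P 0" "\<not> P 1" | "\<not> P 0" "P 1" by blast
      then show ?thesis
      proof cases
        case 1
        then have "P k" for k using Pk[of k] by (cases "even k") (auto simp: odd_iff_mod_2_eq_one even_iff_mod_2_eq_zero)
        then show ?thesis using isc by (simp add: X_cycle_def)
      next
        case 2
        then have "\<not> P k" for k using Pk[of k] by (cases "even k") (auto simp: odd_iff_mod_2_eq_one even_iff_mod_2_eq_zero)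
        then show ?thesis using isic by (simp add: X_cycle_def)
      next
        case 3
        then have Pe: "P k = even k" for k using Pk[of k] by (cases "even k") (auto simp: odd_iff_mod_2_eq_one even_iff_mod_2_eq_zero)
        have "\<tau> = pair_prod cs"
        proof (rule fun_eq_cycle[of cs])
          fix y assume "y \<notin> set cs" then show "\<tau> y = pair_prod cs y" using out pp_outside by simp
        next
          fix k assume k: "k < ?s"
          show "\<tau> (cx cs k) = pair_prod cs (cx cs k)"
            using pp_cx[OF assms(1) ev assms(2) k] Pe[of k] notP[of k] P_def by auto
        qed
        then show ?thesis using ev by (simp add: X_cycle_def S_set_def)
      next
        case 4
        then have Pe: "P k = odd k" for k using Pk[of k] by (cases "even k") (auto simp: odd_iff_mod_2_eq_one even_iff_mod_2_eq_zero)
        have "\<tau> = pair_prod (last cs # butlast cs)"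
        proof (rule fun_eq_cycle[of cs])
          fix y show "y \<notin> set cs \<Longrightarrow> \<tau> y = pair_prod (last cs # butlast cs) y"
          proof -
            assume y: "y \<notin> set cs"
            then have "y \<notin> set (last cs # butlast cs)" using set_l2[OF ne] by blast
            then show ?thesis using out[OF y] pp_outside by simp
          qed
        next
          fix k assume k: "k < ?s"
          show "\<tau> (cx cs k) = pair_prod (last cs # butlast cs) (cx cs k)"
            using pp2_cx[OF assms(1) ev assms(2) k] Pe[of k] notP[of k] P_def by auto
        qed
        then show ?thesis using ev by (simp add: X_cycle_def S_set_def)
      qed
    qed
  qed
qed

lemma cycle_char:
  assumes "distinct cs" "length cs \<ge> 2"
  shows "{\<tau>. Qc (cycle_of_list cs) \<tau>} = X_cycle cs"
  using X_sub[OF assms] X_super[OF assms] by blast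

lemma Qc_comp:
  assumes pc: "c permutes A" and ps: "s' permutes B" and dis: "A \<inter> B = {}"
  shows "Qc (c \<circ> s') \<tau> \<longleftrightarrow> (\<exists>\<tau>1 \<tau>2. \<tau> = \<tau>1 \<circ> \<tau>2 \<and> Qc c \<tau>1 \<and> Qc s' \<tau>2)"
proof -
  let ?ic = "inv_into UNIV c" and ?is = "inv_into UNIV s'"
  have bc: "bij c" and bs: "bij s'" using pc ps by (auto simp: permutes_bij)
  have pic: "?ic permutes A" and pis: "?is permutes B" using pc ps by (auto intro: permutes_inv)
  have invc: "inv_into UNIV (c \<circ> s') = ?is \<circ> ?ic" using o_inv_distrib[OF bc bs] .
  have cA: "c a \<in> A" "?ic a \<in> A" if "a \<in> A" for a
    using that permutes_in_image[OF pc] permutes_in_image[OF pic] by auto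
  have cnA: "c a = a" "?ic a = a" if "a \<notin> A" for a
    using that permutes_not_in[OF pc] permutes_not_in[OF pic] by auto
  have sA: "s' a = a" "?is a = a" if "a \<in> A" for a
    using that dis permutes_not_in[OF ps] permutes_not_in[OF pis] by auto
  have snA: "s' a \<notin> A" "?is a \<notin> A" if "a \<notin> A" for a
  proof -
    show "s' a \<notin> A"
    proof (cases "a \<in> B")
      case True then show ?thesis using permutes_in_image[OF ps] dis by auto
    next
      case False then show ?thesis using permutes_not_in[OF ps] that by auto
    qed
    show "?is a \<notin> A"
    proof (cases "a \<in> B")
      case True then show ?thesis using permutes_in_image[OF pis] dis by auto
    next
      case False then show ?thesis using permutes_not_in[OF pis] that by auto
    qed
  qed
  have vA: "(c \<circ> s') a = c a" "inv_into UNIV (c \<circ> s') a = ?ic a" if "a \<in> A" for a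
    using that sA cA invc by auto
  have vnA: "(c \<circ> s') a = s' a" "inv_into UNIV (c \<circ> s') a = ?is a" if "a \<notin> A" for a
    using that snA cnA invc by auto
  show ?thesis
  proof
    assume q: "Qc (c \<circ> s') \<tau>"
    have inj: "inj \<tau>" using q by (simp add: Qc_def)
    have tv: "\<tau> a = (c \<circ> s') a \<or> \<tau> a = inv_into UNIV (c \<circ> s') a" for a using q by (simp add: Qc_def)
    have tA: "\<tau> a = c a \<or> \<tau> a = ?ic a" if "a \<in> A" for a using tv[of a] vA[OF that] by simp
    have tnA: "\<tau> a = s' a \<or> \<tau> a = ?is a" if "a \<notin> A" for a using tv[of a] vnA[OF that] by simp
    have tA': "\<tau> a \<in> A" if "a \<in> A" for a using tA[OF that] cA[OF that] by auto
    have tnA': "\<tau> a \<notin> A" if "a \<notin> A" for a using tnA[OF that] snA[OF that] by auto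
    define \<tau>1 where "\<tau>1 i = (if i \<in> A then \<tau> i else i)" for i
    define \<tau>2 where "\<tau>2 i = (if i \<in> A then i else \<tau> i)" for i
    have "\<tau> = \<tau>1 \<circ> \<tau>2"
    proof
      fix i show "\<tau> i = (\<tau>1 \<circ> \<tau>2) i"
        using tnA'[of i] by (cases "i \<in> A") (auto simp: \<tau>1_def \<tau>2_def)
    qed
    moreover have "Qc c \<tau>1"
      unfolding Qc_def
    proof (intro conjI allI)
      show "inj \<tau>1"
      proof (rule injI)
        fix x y assume "\<tau>1 x = \<tau>1 y"
        then show "x = y" using inj tA' unfolding \<tau>1_def
          by (cases "x \<in> A"; cases "y \<in> A") (auto simp: inj_eq)
      qed
      fix a show "\<tau>1 a = c a \<or> \<tau>1 a = ?ic a"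
        using tA[of a] cnA[of a] by (auto simp: \<tau>1_def)
    qed
    moreover have "Qc s' \<tau>2"
      unfolding Qc_def
    proof (intro conjI allI)
      show "inj \<tau>2"
      proof (rule injI)
        fix x y assume "\<tau>2 x = \<tau>2 y"
        then show "x = y" using inj tnA' unfolding \<tau>2_def
          by (cases "x \<in> A"; cases "y \<in> A") (auto simp: inj_eq)
      qed
      fix a show "\<tau>2 a = s' a \<or> \<tau>2 a = ?is a"
        using tnA[of a] sA[of a] by (auto simp: \<tau>2_def)
    qed
    ultimately show "\<exists>\<tau>1 \<tau>2. \<tau> = \<tau>1 \<circ> \<tau>2 \<and> Qc c \<tau>1 \<and> Qc s' \<tau>2" by blast
  next
    assume "\<exists>\<tau>1 \<tau>2. \<tau> = \<tau>1 \<circ> \<tau>2 \<and> Qc c \<tau>1 \<and> Qc s' \<tau>2"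
    then obtain \<tau>1 \<tau>2 where t: "\<tau> = \<tau>1 \<circ> \<tau>2" and q1: "Qc c \<tau>1" and q2: "Qc s' \<tau>2" by blast
    have i1: "inj \<tau>1" and i2: "inj \<tau>2" using q1 q2 by (auto simp: Qc_def)
    have v1: "\<tau>1 a = c a \<or> \<tau>1 a = ?ic a" for a using q1 by (simp add: Qc_def)
    have v2: "\<tau>2 a = s' a \<or> \<tau>2 a = ?is a" for a using q2 by (simp add: Qc_def)
    show "Qc (c \<circ> s') \<tau>"
      unfolding Qc_def
    proof (intro conjI allI)
      show "inj \<tau>" using t i1 i2 by (simp add: inj_compose)
      fix a
      show "\<tau> a = (c \<circ> s') a \<or> \<tau> a = inv_into UNIV (c \<circ> s') a"
      proof (cases "a \<in> A")
        case True
        have "\<tau>2 a = a" using v2[of a] sA[OF True] by auto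
        then show ?thesis using t v1[of a] vA[OF True] by auto
      next
        case False
        have "\<tau>2 a \<notin> A" using v2[of a] snA[OF False] by auto
        then have "\<tau>1 (\<tau>2 a) = \<tau>2 a" using v1[of "\<tau>2 a"] cnA by auto
        then show ?thesis using t v2[of a] vnA[OF False] by auto
      qed
    qed
  qed
qed

fun dsj :: "nat list list \<Rightarrow> bool" where
  "dsj [] = True"
| "dsj (cs # css) = (set cs \<inter> \<Union>(set ` set css) = {} \<and> dsj css)"

lemma foldr_permutes: "foldr (\<circ>) (map cycle_of_list css) id permutes \<Union>(set ` set css)"
proof (induction css)
  case Nil
  have e: "foldr (\<circ>) (map cycle_of_list []) id = id" by simp
  show ?case unfolding e by (rule permutes_id)
next
  case (Cons cs css)
  have a: "cycle_of_list cs permutes \<Union>(set ` set (cs # css))"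
    by (rule permutes_subset[OF cycle_permutes]) auto
  have b: "foldr (\<circ>) (map cycle_of_list css) id permutes \<Union>(set ` set (cs # css))"
    by (rule permutes_subset[OF Cons.IH]) auto
  have eq: "foldr (\<circ>) (map cycle_of_list (cs # css)) id = cycle_of_list cs \<circ> foldr (\<circ>) (map cycle_of_list css) id"
    by simp
  show ?case unfolding eq by (rule permutes_compose[OF b a])
qed

lemma X_perm_Nil: "X_perm [] = {id}"
  by (auto simp: X_perm_def)

lemma X_perm_Cons: "X_perm (cs # css) = {\<tau>1 \<circ> \<tau>2 | \<tau>1 \<tau>2. \<tau>1 \<in> X_cycle cs \<and> \<tau>2 \<in> X_perm css}"
  unfolding X_perm_def list_all2_Cons2 by force

lemma Qc_id: "Qc id \<tau> \<longleftrightarrow> \<tau> = id"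
proof
  assume "Qc id \<tau>"
  then have "\<tau> a = a" for a by (auto simp: Qc_def inv_id)
  then show "\<tau> = id" by (intro ext) (metis id_apply)
qed (auto simp: Qc_def inv_id)

lemma perm_char:
  "(\<forall>cs\<in>set css. distinct cs \<and> length cs \<ge> 2) \<Longrightarrow> dsj css \<Longrightarrow>
   X_perm css = {\<tau>. Qc (foldr (\<circ>) (map cycle_of_list css) id) \<tau>}"
proof (induction css)
  case Nil
  have e: "foldr (\<circ>) (map cycle_of_list []) id = (id :: nat \<Rightarrow> nat)" by simp
  show ?case unfolding X_perm_Nil e Qc_id by auto
next
  case (Cons cs css)
  have p1: "\<forall>cs\<in>set css. distinct cs \<and> length cs \<ge> 2" using Cons.prems(1) by simp
  have p2: "dsj css" using Cons.prems(2) by simp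
  have IH: "X_perm css = {\<tau>. Qc (foldr (\<circ>) (map cycle_of_list css) id) \<tau>}"
    by (rule Cons.IH[OF p1 p2])
  have cc: "X_cycle cs = {\<tau>. Qc (cycle_of_list cs) \<tau>}"
    using cycle_char Cons.prems(1) by simp
  have QC: "Qc (cycle_of_list cs \<circ> foldr (\<circ>) (map cycle_of_list css) id) \<tau> \<longleftrightarrow>
      (\<exists>\<tau>1 \<tau>2. \<tau> = \<tau>1 \<circ> \<tau>2 \<and> Qc (cycle_of_list cs) \<tau>1 \<and> Qc (foldr (\<circ>) (map cycle_of_list css) id) \<tau>2)" for \<tau>
    by (rule Qc_comp[OF cycle_permutes foldr_permutes]) (use Cons.prems(2) in simp)
  have eq: "foldr (\<circ>) (map cycle_of_list (cs # css)) id = cycle_of_list cs \<circ> foldr (\<circ>) (map cycle_of_list css) id"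
    by simp
  show ?case unfolding X_perm_Cons IH cc eq using QC by blast
qed

lemma dsj_of_nth:
  "(\<forall>i < length css. \<forall>j < length css. i \<noteq> j \<longrightarrow> set (css ! i) \<inter> set (css ! j) = {}) \<Longrightarrow> dsj css"
proof (induction css)
  case Nil then show ?case by simp
next
  case (Cons cs css)
  have tl: "\<forall>i < length css. \<forall>j < length css. i \<noteq> j \<longrightarrow> set (css ! i) \<inter> set (css ! j) = {}"
  proof (intro allI impI)
    fix i j assume "i < length css" "j < length css" "i \<noteq> j"
    then show "set (css ! i) \<inter> set (css ! j) = {}"
      using Cons.prems[rule_format, of "Suc i" "Suc j"] by simp
  qed
  have "set cs \<inter> set cs' = {}" if ins: "cs' \<in> set css" for cs'
  proof -
    obtain j where "j < length css" "css ! j = cs'" using ins by (auto simp: in_set_conv_nth)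
    then show ?thesis using Cons.prems[rule_format, of 0 "Suc j"] by simp
  qed
  then show ?case using Cons.IH[OF tl] by auto
qed

lemma S_prod:
  "(\<Prod>i\<in>{1..n}. S_mat \<sigma> i (\<tau> i)) =
     (if \<forall>i\<in>{1..n}. \<tau> i = \<sigma> i \<or> \<tau> i = inv_into UNIV \<sigma> i then 1 else 0)"
proof (cases "\<forall>i\<in>{1..n}. \<tau> i = \<sigma> i \<or> \<tau> i = inv_into UNIV \<sigma> i")
  case True
  then show ?thesis by (auto simp: S_mat_def intro!: prod.neutral)
next
  case False
  then obtain i where "i \<in> {1..n}" "S_mat \<sigma> i (\<tau> i) = 0" by (auto simp: S_mat_def)
  then show ?thesis using False by (auto intro!: prod_zero)
qed

lemma perm_set_eq:
  assumes ps: "\<sigma> permutes {1..n}"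
  shows "{\<tau>. \<tau> permutes {1..n} \<and> (\<forall>i\<in>{1..n}. \<tau> i = \<sigma> i \<or> \<tau> i = inv_into UNIV \<sigma> i)} = {\<tau>. Qc \<sigma> \<tau>}"
proof -
  have pis: "inv_into UNIV \<sigma> permutes {1..n}" using permutes_inv[OF ps] .
  have "\<tau> permutes {1..n} \<and> (\<forall>i\<in>{1..n}. \<tau> i = \<sigma> i \<or> \<tau> i = inv_into UNIV \<sigma> i) \<longleftrightarrow> Qc \<sigma> \<tau>" for \<tau>
  proof
    assume a: "\<tau> permutes {1..n} \<and> (\<forall>i\<in>{1..n}. \<tau> i = \<sigma> i \<or> \<tau> i = inv_into UNIV \<sigma> i)"
    show "Qc \<sigma> \<tau>" unfolding Qc_def
    proof (intro conjI allI)
      show "inj \<tau>" using a permutes_inj by blast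
      fix i show "\<tau> i = \<sigma> i \<or> \<tau> i = inv_into UNIV \<sigma> i"
        using a permutes_not_in[OF ps, of i] permutes_not_in[of \<tau> "{1..n}" i] by (cases "i \<in> {1..n}") auto
    qed
  next
    assume q: "Qc \<sigma> \<tau>"
    have inj: "inj \<tau>" and v: "\<And>i. \<tau> i = \<sigma> i \<or> \<tau> i = inv_into UNIV \<sigma> i" using q by (auto simp: Qc_def)
    have out: "\<tau> i = i" if "i \<notin> {1..n}" for i
      using v[of i] permutes_not_in[OF ps that] permutes_not_in[OF pis that] by auto
    have sub: "\<tau> ` {1..n} \<subseteq> {1..n}"
      using v permutes_in_image[OF ps] permutes_in_image[OF pis] by (metis image_subsetI)
    have "\<tau> ` {1..n} = {1..n}" using endo_inj_surj[OF finite_atLeastAtMost sub inj_on_subset[OF inj]] by simp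
    then have "bij_betw \<tau> {1..n} {1..n}" using inj_on_subset[OF inj] by (simp add: bij_betw_def)
    then have "\<tau> permutes {1..n}" using out by (rule bij_imp_permutes)
    then show "\<tau> permutes {1..n} \<and> (\<forall>i\<in>{1..n}. \<tau> i = \<sigma> i \<or> \<tau> i = inv_into UNIV \<sigma> i)" using v by blast
  qed
  then show ?thesis by blast
qed

theorem mainTheorem4:
  fixes n :: nat and G :: "(nat \<Rightarrow> nat) set" and chi :: "(nat \<Rightarrow> nat) \<Rightarrow> complex"
    and \<sigma> :: "nat \<Rightarrow> nat" and css :: "nat list list"
  assumes "n \<ge> 1"
    and "subgroup G (sym_group n)"
    and "\<sigma> permutes {1..n}"
    and "cycle_decomp_of \<sigma> css"
  shows "gen_matrix_fun n G chi (S_mat \<sigma>) = (\<Sum>\<tau> \<in> X_perm css. ext_zero G chi \<tau>)"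
proof -
  have cd: "\<forall>cs \<in> set css. distinct cs \<and> length cs \<ge> 2"
    "\<forall>i < length css. \<forall>j < length css. i \<noteq> j \<longrightarrow> set (css ! i) \<inter> set (css ! j) = {}"
    "\<sigma> = foldr (\<circ>) (map cycle_of_list css) id"
    using assms(4) unfolding cycle_decomp_of_def by blast+
  have X: "X_perm css = {\<tau>. \<tau> permutes {1..n} \<and> (\<forall>i\<in>{1..n}. \<tau> i = \<sigma> i \<or> \<tau> i = inv_into UNIV \<sigma> i)}"
    using perm_char[OF cd(1) dsj_of_nth[OF cd(2)]] perm_set_eq[OF assms(3)] cd(3) by simp
  have fin: "finite {\<tau>. \<tau> permutes {1..n}}" using finite_permutations[of "{1..n::nat}"] by simp
  have "gen_matrix_fun n G chi (S_mat \<sigma>) =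
      (\<Sum>\<tau> \<in> {\<tau>. \<tau> permutes {1..n}}. if (\<forall>i\<in>{1..n}. \<tau> i = \<sigma> i \<or> \<tau> i = inv_into UNIV \<sigma> i) then ext_zero G chi \<tau> else 0)"
    unfolding gen_matrix_fun_def S_prod by (intro sum.cong) auto
  also have "\<dots> = (\<Sum>\<tau> \<in> {\<tau> \<in> {\<tau>. \<tau> permutes {1..n}}. (\<forall>i\<in>{1..n}. \<tau> i = \<sigma> i \<or> \<tau> i = inv_into UNIV \<sigma> i)}. ext_zero G chi \<tau>)"
    by (rule sum.inter_filter[OF fin, symmetric])
  also have "\<dots> = (\<Sum>\<tau> \<in> X_perm css. ext_zero G chi \<tau>)"
    unfolding X by (intro sum.cong) auto
  finally show ?thesis .
qed

end
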